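(* The weak Krull dimension of $\mathcal{S}'(\mathbb{Z}^{d})$ is $1$: finitely generated proper prime ideals of $\mathcal{S}'(\mathbb{Z}^{d})$ exist, and if $\mathfrak{p}_1\subseteq\mathfrak{p}_2$ are finitely generated proper prime ideals of $\mathcal{S}'(\mathbb{Z}^{d})$, then $\mathfrak{p}_1=\mathfrak{p}_2$ (so every chain of distinct finitely generated proper prime ideals consists of exactly one ideal).
   Context: For $\mathbf{n}=(n_1,\dots,n_d)\in\mathbb{Z}^d$ write $\|\mathbf{n}\|:=|n_1|+\cdots+|n_d|$. $\mathcal{S}'(\mathbb{Z}^{d})$ denotes the set of all maps $f:\mathbb{Z}^d\to\mathbb{C}$ of at most polynomial growth, i.e. for which there exist a real $M>0$ and an integer $m\geq 0$ with $|f(\mathbf{n})|\leq M(1+\|\mathbf{n}\|)^m$ for all $\mathbf{n}\in\mathbb{Z}^d$. It is a commutative unital ring under pointwise addition and multiplication. The weak Krull dimension of a commutative ring is the supremum of the lengths of chains of distinct proper finitely generated prime ideals, where (as in the paper) the length of a chain is counted as the number of ideals in it. *)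

theory Defs
  imports "HOL-Analysis.Analysis" "HOL-Algebra.Ideal"
begin

text \<open>The l1-norm on Z^d, with Z^d rendered as int ^ 'd for a finite index type 'd (d = CARD('d)).\<close>
definition l1norm :: "int ^ 'd \<Rightarrow> int" where
  "l1norm n = (\<Sum>i\<in>UNIV. \<bar>n $ i\<bar>)"

text \<open>S'(Z^d): maps of at most polynomial growth.\<close>
definition tempered :: "(int ^ 'd \<Rightarrow> complex) set" where
  "tempered = {f. \<exists>M::real. M > 0 \<and> (\<exists>m::nat. \<forall>n. cmod (f n) \<le> M * (1 + real_of_int (l1norm n)) ^ m)}"

definition SZ :: "(int ^ 'd \<Rightarrow> complex) ring" where
  "SZ = \<lparr>carrier = tempered,
         monoid.mult = (\<lambda>f g x. f x * g x),
         one = (\<lambda>x. 1),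
         zero = (\<lambda>x. 0),
         add = (\<lambda>f g x. f x + g x)\<rparr>"

definition fg_proper_prime :: "('a, 'b) ring_scheme \<Rightarrow> 'a set \<Rightarrow> bool" where
  "fg_proper_prime R P \<longleftrightarrow> primeideal P R \<and> P \<noteq> carrier R \<and>
     (\<exists>A. finite A \<and> A \<subseteq> carrier R \<and> P = Idl\<^bsub>R\<^esub> A)"

end

theory Submission
  imports Defs
begin

definition pw :: "int ^ 'd \<Rightarrow> real" where "pw n = 1 + real_of_int (l1norm n)"

lemma pw_ge1: "pw n \<ge> 1"
  unfolding pw_def l1norm_def by (simp add: sum_nonneg)

lemma tempered_iff: fixes f :: "int ^ 'd \<Rightarrow> complex" shows "f \<in> tempered \<longleftrightarrow> (\<exists>M m. \<forall>n. cmod (f n) \<le> M * pw n ^ m)" (is "_ \<longleftrightarrow> ?R")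
proof
  assume "f \<in> tempered" thus ?R
    unfolding tempered_def pw_def by blast
next
  assume ?R
  then obtain M m where h: "\<And>n. cmod (f n) \<le> M * pw n ^ m" by blast
  have "\<And>n. cmod (f n) \<le> max M 1 * pw n ^ m"
  proof -
    fix n :: "int ^ 'd"
    have "M * pw n ^ m \<le> max M 1 * pw n ^ m"
      using pw_ge1[of n] by (intro mult_right_mono) auto
    thus "cmod (f n) \<le> max M 1 * pw n ^ m" using h[of n] by linarith
  qed
  thus "f \<in> tempered" unfolding tempered_def pw_def
    by (intro CollectI exI[of _ "max M 1"] conjI exI[of _ m]) auto
qed

lemma temperedE:
  fixes f :: "int ^ 'd \<Rightarrow> complex"
  assumes "f \<in> tempered"
  obtains M m where "M \<ge> 0" "\<And>n. cmod (f n) \<le> M * pw n ^ m"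
proof -
  from assms obtain M m where "M > 0" "\<And>n. cmod (f n) \<le> M * pw n ^ m"
    unfolding tempered_def pw_def by blast
  thus ?thesis using that[of M m] by simp
qed

lemma pw_pow_mono: "pw n ^ m \<le> pw n ^ (m + k)"
  using pw_ge1[of n] by (intro power_increasing) auto

lemma tempered_mult:
  fixes f g :: "int ^ 'd \<Rightarrow> complex"
  assumes "f \<in> tempered" "g \<in> tempered" shows "(\<lambda>x. f x * g x) \<in> tempered"
proof -
  obtain M m where M: "M \<ge> 0" "\<And>n. cmod (f n) \<le> M * pw n ^ m" using temperedE[OF assms(1)] by blast
  obtain K k where K: "K \<ge> 0" "\<And>n. cmod (g n) \<le> K * pw n ^ k" using temperedE[OF assms(2)] by blast
  have "\<And>n. cmod (f n * g n) \<le> (M * K) * pw n ^ (m + k)"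
  proof -
    fix n :: "int ^ 'd"
    have "cmod (f n * g n) = cmod (f n) * cmod (g n)" by (simp add: norm_mult)
    also have "\<dots> \<le> (M * pw n ^ m) * (K * pw n ^ k)"
      using pw_ge1[of n] M(1) K(1) by (intro mult_mono M K) auto
    also have "\<dots> = (M * K) * pw n ^ (m + k)" by (simp add: power_add)
    finally show "cmod (f n * g n) \<le> (M * K) * pw n ^ (m + k)" .
  qed
  thus ?thesis unfolding tempered_iff by blast
qed

lemma tempered_add:
  fixes f g :: "int ^ 'd \<Rightarrow> complex"
  assumes "f \<in> tempered" "g \<in> tempered" shows "(\<lambda>x. f x + g x) \<in> tempered"
proof -
  obtain M m where M: "M \<ge> 0" "\<And>n. cmod (f n) \<le> M * pw n ^ m" using temperedE[OF assms(1)] by blast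
  obtain K k where K: "K \<ge> 0" "\<And>n. cmod (g n) \<le> K * pw n ^ k" using temperedE[OF assms(2)] by blast
  have "\<And>n. cmod (f n + g n) \<le> (M + K) * pw n ^ (m + k)"
  proof -
    fix n :: "int ^ 'd"
    have "cmod (f n + g n) \<le> cmod (f n) + cmod (g n)" by (rule norm_triangle_ineq)
    also have "\<dots> \<le> M * pw n ^ (m + k) + K * pw n ^ (k + m)"
      using M(2)[of n] K(2)[of n] mult_left_mono[OF pw_pow_mono[of n m k] M(1)]
        mult_left_mono[OF pw_pow_mono[of n k m] K(1)] by linarith
    also have "\<dots> = (M + K) * pw n ^ (m + k)" by (simp add: algebra_simps add.commute)
    finally show "cmod (f n + g n) \<le> (M + K) * pw n ^ (m + k)" .
  qed
  thus ?thesis unfolding tempered_iff by blast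
qed

lemma tempered_dom:
  assumes "f \<in> tempered" "\<And>n. cmod (g n) \<le> cmod (f n)" shows "g \<in> tempered"
  using assms unfolding tempered_iff by (meson order_trans)

lemma tempered_const: "(\<lambda>x. c) \<in> tempered"
  unfolding tempered_iff by (rule exI[of _ "cmod c"], rule exI[of _ 0]) simp

lemma SZ_simps[simp]: "carrier SZ = tempered" "(\<otimes>\<^bsub>SZ\<^esub>) = (\<lambda>f g x. f x * g x)"
  "(\<oplus>\<^bsub>SZ\<^esub>) = (\<lambda>f g x. f x + g x)" "\<one>\<^bsub>SZ\<^esub> = (\<lambda>x. 1)" "\<zero>\<^bsub>SZ\<^esub> = (\<lambda>x. 0)"
  by (simp_all add: SZ_def)

lemma cring_SZ: "cring SZ"
proof (rule cringI)
  show "abelian_group SZ"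
  proof (rule abelian_groupI)
    fix x assume x: "x \<in> carrier SZ"
    have "(\<lambda>n. -1 * x n) \<in> tempered" using x by (intro tempered_mult tempered_const) auto
    thus "\<exists>y\<in>carrier SZ. y \<oplus>\<^bsub>SZ\<^esub> x = \<zero>\<^bsub>SZ\<^esub>" by (intro bexI[of _ "\<lambda>n. -1 * x n"]) auto
  qed (auto intro: tempered_add tempered_const simp: algebra_simps)
  show "comm_monoid SZ"
    by (rule comm_monoidI) (auto intro: tempered_mult tempered_const simp: algebra_simps)
qed (auto simp: algebra_simps)

lemma SZ_minus: "f \<in> tempered \<Longrightarrow> \<ominus>\<^bsub>SZ\<^esub> f = (\<lambda>n. - f n)"
proof -
  assume f: "f \<in> tempered"
  interpret cring SZ by (rule cring_SZ)
  have m: "(\<lambda>n. - f n) \<in> tempered" using tempered_dom[OF f, of "\<lambda>n. - f n"] by simp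
  show ?thesis by (rule minus_equality) (use f m in auto)
qed

lemma ideal_crit:
  fixes I :: "(int ^ 'd \<Rightarrow> complex) set"
  assumes "I \<subseteq> tempered" "(\<lambda>n. 0) \<in> I" "\<And>a b. a \<in> I \<Longrightarrow> b \<in> I \<Longrightarrow> (\<lambda>n. a n + b n) \<in> I"
    "\<And>a x. a \<in> I \<Longrightarrow> x \<in> tempered \<Longrightarrow> (\<lambda>n. x n * a n) \<in> I"
  shows "ideal I SZ"
proof -
  interpret cring "SZ :: (int ^ 'd \<Rightarrow> complex) ring" by (rule cring_SZ)
  show ?thesis
  proof (rule idealI)
    show "ring SZ" using cring_SZ by (rule cring.axioms(1))
    show "subgroup I (add_monoid SZ)"
    proof
      fix a assume a: "a \<in> I"
      have "(\<lambda>n. (-1) * a n) \<in> I" using assms(4)[OF a tempered_const] .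
      moreover have "a \<in> tempered" using a assms(1) by auto
      moreover have "inv\<^bsub>add_monoid SZ\<^esub> a = \<ominus>\<^bsub>SZ\<^esub> a" by (simp add: a_inv_def)
      ultimately show "inv\<^bsub>add_monoid SZ\<^esub> a \<in> I"
        using SZ_minus[of a] by simp
    qed (use assms in auto)
  next
    fix a x :: "int ^ 'd \<Rightarrow> complex" assume "a \<in> I" "x \<in> carrier SZ"
    thus "x \<otimes>\<^bsub>SZ\<^esub> a \<in> I" using assms(4) by auto
    show "a \<otimes>\<^bsub>SZ\<^esub> x \<in> I" using assms(4)[of a x] \<open>a \<in> I\<close> \<open>x \<in> carrier SZ\<close>
      by (simp add: mult.commute)
  qed
qed

definition Mid :: "int ^ 'd \<Rightarrow> (int ^ 'd \<Rightarrow> complex) set" where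
  "Mid a = {f \<in> tempered. f a = 0}"

definition dl :: "int ^ 'd \<Rightarrow> int ^ 'd \<Rightarrow> complex" where
  "dl a = (\<lambda>x. if x = a then 1 else 0)"

lemma dl_tempered: "dl a \<in> tempered"
  by (rule tempered_dom[OF tempered_const[of 1]]) (simp add: dl_def)

lemma e_tempered: "(\<lambda>x. 1 - dl a x) \<in> tempered"
  by (rule tempered_dom[OF tempered_const[of 1]]) (simp add: dl_def)

lemma Mid_ideal: "ideal (Mid a) SZ"
  by (rule ideal_crit) (auto simp: Mid_def intro: tempered_add tempered_mult tempered_const)

lemma Mid_prime: "primeideal (Mid a) SZ"
proof (rule primeidealI)
  show "ideal (Mid a) SZ" by (rule Mid_ideal)
  show "cring SZ" by (rule cring_SZ)
  have "(\<lambda>x. 1) \<notin> Mid a" by (simp add: Mid_def)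
  moreover have "(\<lambda>x. 1) \<in> carrier SZ" using tempered_const by simp
  ultimately show "carrier SZ \<noteq> Mid a" by blast
qed (auto simp: Mid_def)

lemma Mid_gen: "Mid a = Idl\<^bsub>SZ\<^esub> {\<lambda>x. 1 - dl a x}"
proof -
  interpret cring "SZ :: (int ^ 'd \<Rightarrow> complex) ring" by (rule cring_SZ)
  let ?e = "\<lambda>x. 1 - dl a x"
  have ec: "?e \<in> carrier SZ" using e_tempered by simp
  interpret I: ideal "Idl\<^bsub>SZ\<^esub> {?e}" SZ using ec by (intro genideal_ideal) auto
  show ?thesis
  proof
    show "Idl\<^bsub>SZ\<^esub> {?e} \<subseteq> Mid a"
      by (rule genideal_minimal[OF Mid_ideal]) (use e_tempered in \<open>simp add: Mid_def dl_def\<close>)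
    show "Mid a \<subseteq> Idl\<^bsub>SZ\<^esub> {?e}"
    proof
      fix f assume f: "f \<in> Mid a"
      have "f \<otimes>\<^bsub>SZ\<^esub> ?e \<in> Idl\<^bsub>SZ\<^esub> {?e}"
        using f by (intro I.I_l_closed genideal_self' ec) (simp add: Mid_def)
      moreover have "f \<otimes>\<^bsub>SZ\<^esub> ?e = f" using f by (auto simp: Mid_def dl_def)
      ultimately show "f \<in> Idl\<^bsub>SZ\<^esub> {?e}" by simp
    qed
  qed
qed

lemma Mid_fgpp: "fg_proper_prime SZ (Mid a)"
  unfolding fg_proper_prime_def
proof (intro conjI)
  show "primeideal (Mid a) SZ" by (rule Mid_prime)
  interpret primeideal "Mid a" SZ by (rule Mid_prime)
  show "Mid a \<noteq> carrier SZ" using I_notcarr by auto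
  show "\<exists>A. finite A \<and> A \<subseteq> carrier SZ \<and> Mid a = Idl\<^bsub>SZ\<^esub> A"
    using Mid_gen e_tempered by (intro exI[of _ "{\<lambda>x. 1 - dl a x}"]) auto
qed

lemma sqrt_le_1_plus: "0 \<le> x \<Longrightarrow> sqrt x \<le> 1 + x"
proof -
  assume x: "0 \<le> x"
  have "sqrt x \<le> sqrt ((1 + x)^2)" using x by (intro real_sqrt_le_mono) (simp add: power2_eq_square algebra_simps)
  thus ?thesis using x by simp
qed

lemma fgpp_Mid:
  fixes P :: "(int ^ 'd \<Rightarrow> complex) set"
  assumes fg: "fg_proper_prime SZ P"
  shows "\<exists>a. P = Mid a"
proof -
  interpret primeideal P "SZ :: (int ^ 'd \<Rightarrow> complex) ring" using fg by (simp add: fg_proper_prime_def)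
  obtain A where A: "finite A" "A \<subseteq> carrier SZ" "P = Idl\<^bsub>SZ\<^esub> A" and Pne: "P \<noteq> carrier SZ"
    using fg by (auto simp: fg_proper_prime_def)
  have AP: "A \<subseteq> P" using A genideal_self by auto
  show ?thesis
  proof (cases "\<exists>a. \<forall>f\<in>A. f a = 0")
    case True
    then obtain a where a: "\<And>f. f \<in> A \<Longrightarrow> f a = 0" by blast
    have PM: "P \<subseteq> Mid a" unfolding A(3)
      by (rule genideal_minimal[OF Mid_ideal]) (use a A(2) in \<open>auto simp: Mid_def\<close>)
    have "dl a \<notin> P" using PM by (auto simp: Mid_def dl_def)
    moreover have "dl a \<otimes>\<^bsub>SZ\<^esub> (\<lambda>x. 1 - dl a x) \<in> P"
    proof -
      have "dl a \<otimes>\<^bsub>SZ\<^esub> (\<lambda>x. 1 - dl a x) = \<zero>\<^bsub>SZ\<^esub>" by (auto simp: dl_def)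
      thus ?thesis using additive_subgroup.zero_closed[OF is_additive_subgroup] by simp
    qed
    ultimately have "(\<lambda>x. 1 - dl a x) \<in> P" using I_prime dl_tempered e_tempered by fastforce
    hence "Mid a \<subseteq> P" unfolding Mid_gen by (intro genideal_minimal is_ideal) auto
    thus ?thesis using PM by blast
  next
    case False
    hence nz: "\<And>a. \<exists>f\<in>A. f a \<noteq> 0" by blast
    define G where "G n = (\<Sum>f\<in>A. cmod (f n) ^ 2)" for n
    define Gc where "Gc n = complex_of_real (G n)" for n
    have Gpos: "G n > 0" for n
    proof -
      obtain f where f: "f \<in> A" "f n \<noteq> 0" using nz by blast
      have "cmod (f n) ^ 2 \<le> G n" unfolding G_def using A(1) f(1) by (intro member_le_sum) auto
      moreover have "cmod (f n) ^ 2 > 0" using f(2) by simp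
      ultimately show ?thesis by linarith
    qed
    have Gnn: "\<And>n. G n \<ge> 0" using Gpos less_imp_le by blast
    have fle: "cmod (f n) ^ 2 \<le> G n" if "f \<in> A" for f n
      unfolding G_def using A(1) that by (intro member_le_sum) auto
    have sumP: "(\<lambda>n. \<Sum>f\<in>B. f n * cnj (f n)) \<in> P" if "B \<subseteq> A" for B
    proof -
      have "finite B" using that A(1) finite_subset by blast
      thus ?thesis using that
      proof (induction B rule: finite_induct)
        case empty
        have "(\<lambda>n. \<Sum>f\<in>{}. f n * cnj (f n)) = \<zero>\<^bsub>SZ\<^esub>" by simp
        thus ?case using additive_subgroup.zero_closed[OF is_additive_subgroup] by simp
      next
        case (insert g B)
        have gP: "g \<in> P" using insert AP by auto
        have gc: "(\<lambda>n. cnj (g n)) \<in> carrier SZ"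
          using Icarr[OF gP] by (simp add: tempered_dom[of g])
        have "g \<otimes>\<^bsub>SZ\<^esub> (\<lambda>n. cnj (g n)) \<in> P" by (rule I_r_closed[OF gP gc])
        hence "g \<otimes>\<^bsub>SZ\<^esub> (\<lambda>n. cnj (g n)) \<oplus>\<^bsub>SZ\<^esub> (\<lambda>n. \<Sum>f\<in>B. f n * cnj (f n)) \<in> P"
          using insert by (intro additive_subgroup.a_closed[OF is_additive_subgroup]) auto
        thus ?case using insert by simp
      qed
    qed
    have GcP: "Gc \<in> P"
    proof -
      have "Gc = (\<lambda>n. \<Sum>f\<in>A. f n * cnj (f n))"
        unfolding Gc_def G_def by (simp only: of_real_sum complex_norm_square)
      thus ?thesis using sumP by auto
    qed
    have Gct: "Gc \<in> tempered" using Icarr[OF GcP] by simp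
    define J where "J = {h \<in> tempered. \<exists>C m. C \<ge> 0 \<and> (\<forall>n. cmod (h n) ^ 2 \<le> C * pw n ^ m * G n)}"
    have Jideal: "ideal J SZ"
    proof (rule ideal_crit)
      show "J \<subseteq> tempered" unfolding J_def by auto
      show "(\<lambda>n. 0) \<in> J" unfolding J_def using tempered_const
        by (auto intro!: exI[of _ 0])
    next
      fix a b assume a: "a \<in> J" and b: "b \<in> J"
      obtain C m where C: "C \<ge> 0" "\<And>n. cmod (a n) ^ 2 \<le> C * pw n ^ m * G n" using a J_def by auto
      obtain D k where D: "D \<ge> 0" "\<And>n. cmod (b n) ^ 2 \<le> D * pw n ^ k * G n" using b J_def by auto
      have "cmod (a n + b n) ^ 2 \<le> (2*C + 2*D) * pw n ^ (m + k) * G n" for n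
      proof -
        have "cmod (a n + b n) ^ 2 \<le> (cmod (a n) + cmod (b n))^2"
          by (intro power_mono norm_triangle_ineq) auto
        also have "\<dots> \<le> 2 * cmod (a n)^2 + 2 * cmod (b n)^2"
          using zero_le_square[of "cmod (a n) - cmod (b n)"]
          by (simp add: power2_eq_square algebra_simps)
        also have "\<dots> \<le> 2 * (C * pw n ^ (m+k) * G n) + 2 * (D * pw n ^ (k + m) * G n)"
        proof -
          have g: "G n \<ge> 0" using Gpos[of n] by simp
          have "C * pw n ^ m * G n \<le> C * pw n ^ (m+k) * G n"
            using C(1) g pw_pow_mono[of n m k] by (intro mult_right_mono mult_left_mono) auto
          moreover have "D * pw n ^ k * G n \<le> D * pw n ^ (k+m) * G n"
            using D(1) g pw_pow_mono[of n k m] by (intro mult_right_mono mult_left_mono) auto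
          ultimately show ?thesis using C(2)[of n] D(2)[of n] by linarith
        qed
        also have "\<dots> = (2*C + 2*D) * pw n ^ (m + k) * G n" by (simp add: algebra_simps add.commute)
        finally show ?thesis .
      qed
      moreover have "(\<lambda>n. a n + b n) \<in> tempered" using a b J_def by (auto intro: tempered_add)
      ultimately show "(\<lambda>n. a n + b n) \<in> J" unfolding J_def using C(1) D(1)
        by (auto intro!: exI[of _ "2*C+2*D"] exI[of _ "m+k"])
    next
      fix a x :: "int ^ 'd \<Rightarrow> complex" assume a: "a \<in> J" and x: "x \<in> tempered"
      obtain C m where C: "C \<ge> 0" "\<And>n. cmod (a n) ^ 2 \<le> C * pw n ^ m * G n" using a J_def by auto
      obtain M k where M: "M \<ge> 0" "\<And>n. cmod (x n) \<le> M * pw n ^ k" using temperedE[OF x] by blast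
      have "cmod (x n * a n) ^ 2 \<le> (M^2 * C) * pw n ^ (2*k + m) * G n" for n
      proof -
        have "cmod (x n * a n) ^ 2 = cmod (x n) ^ 2 * cmod (a n) ^ 2" by (simp add: norm_mult power_mult_distrib)
        also have "\<dots> \<le> (M * pw n ^ k)^2 * (C * pw n ^ m * G n)"
          by (intro mult_mono power_mono M(2) C(2)) auto
        also have "\<dots> = (M^2 * C) * pw n ^ (2*k + m) * G n"
          by (simp add: power_add power_mult_distrib power_mult algebra_simps)
        finally show ?thesis .
      qed
      moreover have "(\<lambda>n. x n * a n) \<in> tempered" using a x J_def by (auto intro: tempered_mult)
      ultimately show "(\<lambda>n. x n * a n) \<in> J" unfolding J_def using C(1) M(1)
        by (auto intro!: exI[of _ "M^2 * C"] exI[of _ "2*k+m"])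
    qed
    have AJ: "A \<subseteq> J"
    proof
      fix f assume f: "f \<in> A"
      have "cmod (f n) ^ 2 \<le> 1 * pw n ^ 0 * G n" for n using fle[OF f] by simp
      thus "f \<in> J" unfolding J_def using f A(2) by (intro CollectI conjI exI[of _ "1::real"] exI[of _ "0::nat"]) auto
    qed
    have PJ: "P \<subseteq> J" unfolding A(3) by (rule genideal_minimal[OF Jideal AJ])
    define chi where "chi n = complex_of_real (sqrt (G n))" for n
    define psi where "psi n = complex_of_real (sqrt (sqrt (G n)))" for n
    have psit: "psi \<in> tempered"
    proof (rule tempered_dom[of "\<lambda>n. 2 + Gc n"])
      show "(\<lambda>n. 2 + Gc n) \<in> tempered" by (intro tempered_add tempered_const Gct)
      fix n
      have g: "G n \<ge> 0" using Gpos[of n] by simp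
      have "sqrt (sqrt (G n)) \<le> 1 + sqrt (G n)" by (rule sqrt_le_1_plus) (use g in simp)
      also have "\<dots> \<le> 2 + G n" using sqrt_le_1_plus[OF g] by simp
      moreover have "2 + Gc n = complex_of_real (2 + G n)" by (simp add: Gc_def)
      ultimately show "cmod (psi n) \<le> cmod (2 + Gc n)" using g
        unfolding psi_def by (simp only: norm_of_real) simp
    qed
    have chieq: "chi = psi \<otimes>\<^bsub>SZ\<^esub> psi"
      using Gnn by (simp add: chi_def psi_def fun_eq_iff flip: of_real_mult)
    have chit: "chi \<in> tempered" unfolding chieq using psit by (simp add: tempered_mult)
    have "chi \<otimes>\<^bsub>SZ\<^esub> chi = Gc"
      using Gnn by (simp add: chi_def Gc_def fun_eq_iff flip: of_real_mult)
    hence "chi \<in> P" using I_prime[of chi chi] GcP chit by auto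
    hence "psi \<in> P" using I_prime[of psi psi] psit unfolding chieq by auto
    hence "psi \<in> J" using PJ by auto
    then obtain C m where C: "C \<ge> 0" "\<And>n. cmod (psi n) ^ 2 \<le> C * pw n ^ m * G n"
      unfolding J_def by auto
    have inv_le: "1 / G n \<le> C^2 * pw n ^ (2*m)" for n
    proof -
      define s where "s = sqrt (G n)"
      have s: "s > 0" "G n = s^2" using Gpos[of n] unfolding s_def by auto
      have "cmod (psi n) ^ 2 = s" using s(1) unfolding psi_def s_def[symmetric] by (simp add: norm_of_real)
      hence "s \<le> C * pw n ^ m * s^2" using C(2)[of n] unfolding s(2) by simp
      hence "1 \<le> C * pw n ^ m * s" using s by (simp add: power2_eq_square)
      hence "1 \<le> (C * pw n ^ m * s)^2" by (simp add: one_le_power)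
      hence "1 \<le> (C^2 * pw n ^ (2*m)) * G n" using s
        by (simp add: power_mult_distrib power_mult algebra_simps)
      thus ?thesis using s by (simp add: field_simps)
    qed
    define iv where "iv n = complex_of_real (1 / G n)" for n
    have ivt: "iv \<in> tempered" unfolding tempered_iff
    proof (intro exI allI)
      fix n show "cmod (iv n) \<le> C^2 * pw n ^ (2*m)"
        using inv_le[of n] Gpos[of n] by (simp add: iv_def norm_divide)
    qed
    have "iv \<otimes>\<^bsub>SZ\<^esub> Gc = \<one>\<^bsub>SZ\<^esub>"
      using Gpos by (auto simp: iv_def Gc_def fun_eq_iff simp flip: of_real_mult) (metis Gpos less_irrefl)
    moreover have "iv \<otimes>\<^bsub>SZ\<^esub> Gc \<in> P" using I_l_closed[OF GcP] ivt by simp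
    ultimately have "P = carrier SZ" using one_imp_carrier by simp
    thus ?thesis using Pne by blast
  qed
qed

theorem theorem4p6:
  shows "(\<exists>P. fg_proper_prime (SZ :: (int ^ 'd::finite \<Rightarrow> complex) ring) P) \<and>
         (\<forall>P1 P2. fg_proper_prime (SZ :: (int ^ 'd \<Rightarrow> complex) ring) P1 \<and>
                  fg_proper_prime (SZ :: (int ^ 'd \<Rightarrow> complex) ring) P2 \<and> P1 \<subseteq> P2 \<longrightarrow> P1 = P2)"
proof (intro conjI allI impI)
  show "\<exists>P. fg_proper_prime (SZ :: (int ^ 'd::finite \<Rightarrow> complex) ring) P"
    using Mid_fgpp by blast
next
  fix P1 P2 :: "(int ^ 'd \<Rightarrow> complex) set"
  assume h: "fg_proper_prime SZ P1 \<and> fg_proper_prime SZ P2 \<and> P1 \<subseteq> P2"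
  obtain a where a: "P1 = Mid a" using fgpp_Mid h by blast
  obtain b where b: "P2 = Mid b" using fgpp_Mid h by blast
  have "a = b"
  proof (rule ccontr)
    assume "a \<noteq> b"
    hence "dl b \<in> Mid a" using dl_tempered by (simp add: Mid_def dl_def)
    moreover have "dl b \<notin> Mid b" by (simp add: Mid_def dl_def)
    ultimately show False using h a b by blast
  qed
  thus "P1 = P2" using a b by simp
qed

end
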